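(* Let $R$ be a commutative ring and $M$ a semisimple $R$-module. Let $B$ be the set of all maximal second submodules of $M$, and assume that $Ann(M)\neq\bigcap_{K\in B\setminus\{N\}}Ann(K)$ for every $N\in B$. Then the following are equivalent: (1) $M$ is a multiplication module; (2) every PS-hollow submodule of $M$ is simple; (3) every second submodule of $M$ is simple; (4) $M$ is a comultiplication module.
   Context: A submodule $N\neq 0$ of $M$ is second iff for every ideal $I\leq R$, $IN=N$ or $IN=0$; maximal second submodules are those maximal w.r.t. inclusion among second submodules. An $R$-submodule $N\leq M$ is PS-hollow iff for every ideal $I\leq R$ and every submodule $L\leq M$: $N\subseteq IM+L$ implies $N\subseteq IM$ or $N\subseteq L$. $M$ is a multiplication module iff every submodule of $M$ is of the form $IM$ for some ideal $I\leq R$. $M$ is a comultiplication module iff $K=(0:_M(0:_R K))$ for every submodule $K\leq M$. $Ann(K)=(0:_R K)$. *)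

theory Defs
  imports Main "HOL.Modules"
begin

text \<open>Modules over a commutative ring 'r are modelled by the library locale
  module scale, with M the whole carrier type 'm.\<close>

definition is_ideal :: "'r::comm_ring_1 set \<Rightarrow> bool" where
  "is_ideal I \<longleftrightarrow> 0 \<in> I \<and> (\<forall>x\<in>I. \<forall>y\<in>I. x + y \<in> I) \<and> (\<forall>r. \<forall>x\<in>I. r * x \<in> I)"

definition ann :: "('r::comm_ring_1 \<Rightarrow> 'm::ab_group_add \<Rightarrow> 'm) \<Rightarrow> 'm set \<Rightarrow> 'r set" where
  "ann scale K = {r. \<forall>x\<in>K. scale r x = 0}"

definition ann_M :: "('r::comm_ring_1 \<Rightarrow> 'm::ab_group_add \<Rightarrow> 'm) \<Rightarrow> 'r set \<Rightarrow> 'm set" where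
  "ann_M scale J = {x. \<forall>r\<in>J. scale r x = 0}"

definition ideal_mult :: "('r::comm_ring_1 \<Rightarrow> 'm::ab_group_add \<Rightarrow> 'm) \<Rightarrow> 'r set \<Rightarrow> 'm set \<Rightarrow> 'm set" where
  "ideal_mult scale I N = module.span scale {scale a n | a n. a \<in> I \<and> n \<in> N}"

definition second_sub :: "('r::comm_ring_1 \<Rightarrow> 'm::ab_group_add \<Rightarrow> 'm) \<Rightarrow> 'm set \<Rightarrow> bool" where
  "second_sub scale N \<longleftrightarrow> module.subspace scale N \<and> N \<noteq> {0} \<and>
     (\<forall>I. is_ideal I \<longrightarrow> ideal_mult scale I N = N \<or> ideal_mult scale I N = {0})"

definition max_second_sub :: "('r::comm_ring_1 \<Rightarrow> 'm::ab_group_add \<Rightarrow> 'm) \<Rightarrow> 'm set \<Rightarrow> bool" where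
  "max_second_sub scale N \<longleftrightarrow> second_sub scale N \<and>
     (\<forall>K. second_sub scale K \<and> N \<subseteq> K \<longrightarrow> K = N)"

definition simple_sub :: "('r::comm_ring_1 \<Rightarrow> 'm::ab_group_add \<Rightarrow> 'm) \<Rightarrow> 'm set \<Rightarrow> bool" where
  "simple_sub scale N \<longleftrightarrow> module.subspace scale N \<and> N \<noteq> {0} \<and>
     (\<forall>L. module.subspace scale L \<and> L \<subseteq> N \<longrightarrow> L = {0} \<or> L = N)"

definition ps_hollow :: "('r::comm_ring_1 \<Rightarrow> 'm::ab_group_add \<Rightarrow> 'm) \<Rightarrow> 'm set \<Rightarrow> bool" where
  "ps_hollow scale N \<longleftrightarrow> module.subspace scale N \<and> N \<noteq> {0} \<and>
     (\<forall>I L. is_ideal I \<longrightarrow> module.subspace scale L \<longrightarrow>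
        N \<subseteq> {x + y | x y. x \<in> ideal_mult scale I UNIV \<and> y \<in> L} \<longrightarrow>
        N \<subseteq> ideal_mult scale I UNIV \<or> N \<subseteq> L)"

definition multiplication_module :: "('r::comm_ring_1 \<Rightarrow> 'm::ab_group_add \<Rightarrow> 'm) \<Rightarrow> bool" where
  "multiplication_module scale \<longleftrightarrow>
     (\<forall>N. module.subspace scale N \<longrightarrow> (\<exists>I. is_ideal I \<and> N = ideal_mult scale I UNIV))"

definition comultiplication_module :: "('r::comm_ring_1 \<Rightarrow> 'm::ab_group_add \<Rightarrow> 'm) \<Rightarrow> bool" where
  "comultiplication_module scale \<longleftrightarrow>
     (\<forall>K. module.subspace scale K \<longrightarrow> K = ann_M scale (ann scale K))"

definition semisimple_module :: "('r::comm_ring_1 \<Rightarrow> 'm::ab_group_add \<Rightarrow> 'm) \<Rightarrow> bool" where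
  "semisimple_module scale \<longleftrightarrow>
     (\<forall>N. module.subspace scale N \<longrightarrow>
        (\<exists>L. module.subspace scale L \<and> N \<inter> L = {0} \<and> {x + y | x y. x \<in> N \<and> y \<in> L} = UNIV))"

end

theory Submission
  imports Defs
begin


definition maxl :: "'r::comm_ring_1 set \<Rightarrow> bool" where
  "maxl P \<longleftrightarrow> is_ideal P \<and> 1 \<notin> P \<and> (\<forall>r. r \<notin> P \<longrightarrow> (\<exists>s. 1 - r*s \<in> P))"

lemma exists_maxl:
  fixes J0 :: "'r::comm_ring_1 set"
  assumes J0: "is_ideal J0" "1 \<notin> J0"
  shows "\<exists>P. maxl P \<and> J0 \<subseteq> P"
proof -
  define A where "A = {J. is_ideal J \<and> J0 \<subseteq> J \<and> (1::'r) \<notin> J}"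
  have "\<forall>C\<in>chains A. \<exists>U\<in>A. \<forall>X\<in>C. X \<subseteq> U"
  proof
    fix C assume C: "C \<in> chains A"
    show "\<exists>U\<in>A. \<forall>X\<in>C. X \<subseteq> U"
    proof (cases "C = {}")
      case True then show ?thesis using J0 by (auto simp: A_def)
    next
      case False
      have CA: "C \<subseteq> A" and ch: "\<forall>X\<in>C. \<forall>Y\<in>C. X \<subseteq> Y \<or> Y \<subseteq> X"
        using C by (auto simp: chains_def chain_subset_def)
      have "is_ideal (\<Union>C)"
        unfolding is_ideal_def
      proof (intro conjI ballI allI)
        show "0 \<in> \<Union>C" using False CA by (auto simp: A_def is_ideal_def)
      next
        fix x y assume "x \<in> \<Union>C" "y \<in> \<Union>C"
        then obtain X Y where XY: "X \<in> C" "Y \<in> C" "x \<in> X" "y \<in> Y" by auto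
        show "x + y \<in> \<Union>C"
        proof (cases "X \<subseteq> Y")
          case True
          then have "x \<in> Y" using XY by auto
          then have "x + y \<in> Y" using XY CA by (auto simp: A_def is_ideal_def)
          then show ?thesis using XY by auto
        next
          case False
          then have "Y \<subseteq> X" using ch XY by blast
          then have "y \<in> X" using XY by auto
          then have "x + y \<in> X" using XY CA by (auto simp: A_def is_ideal_def)
          then show ?thesis using XY by auto
        qed
      next
        fix r x assume "x \<in> \<Union>C"
        then obtain X where "X \<in> C" "x \<in> X" by auto
        then have "r * x \<in> X" using CA by (auto simp: A_def is_ideal_def)
        then show "r * x \<in> \<Union>C" using \<open>X \<in> C\<close> by auto
      qed
      moreover have "J0 \<subseteq> \<Union>C" using False CA by (auto simp: A_def)
      moreover have "1 \<notin> \<Union>C" using CA by (auto simp: A_def)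
      ultimately show ?thesis by (auto simp: A_def)
    qed
  qed
  then obtain P where P: "P \<in> A" and Pmax: "\<forall>X\<in>A. P \<subseteq> X \<longrightarrow> X = P"
    using Zorn_Lemma2[of A] by blast
  have "maxl P" unfolding maxl_def
  proof (intro conjI allI impI)
    show "is_ideal P" "1 \<notin> P" using P by (auto simp: A_def)
  next
    fix r assume r: "r \<notin> P"
    define J where "J = {p + r*s | p s. p \<in> P}"
    have PI: "is_ideal P" using P by (auto simp: A_def)
    have "is_ideal J" unfolding is_ideal_def J_def
    proof (intro conjI ballI allI)
      show "0 \<in> {p + r * s |p s. p \<in> P}" using PI by (auto simp: is_ideal_def intro!: exI[of _ 0])
    next
      fix x y assume "x \<in> {p + r * s |p s. p \<in> P}" "y \<in> {p + r * s |p s. p \<in> P}"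
      then obtain p s p' s' where "x = p + r*s" "y = p' + r*s'" "p \<in> P" "p' \<in> P" by auto
      then have "x + y = (p+p') + r*(s+s')" "p + p' \<in> P" using PI by (auto simp: is_ideal_def algebra_simps)
      then show "x + y \<in> {p + r * s |p s. p \<in> P}" by blast
    next
      fix t x assume "x \<in> {p + r * s |p s. p \<in> P}"
      then obtain p s where "x = p + r*s" "p \<in> P" by auto
      then have "t * x = (t*p) + r*(t*s)" by (simp add: algebra_simps)
      moreover have "t*p \<in> P" using PI \<open>p \<in> P\<close> unfolding is_ideal_def by blast
      ultimately show "t * x \<in> {p + r * s |p s. p \<in> P}" by blast
    qed
    have PJ: "P \<subseteq> J" unfolding J_def by (force intro: exI[of _ 0])
    have "r = 0 + r * 1" "(0::'r) \<in> P" using PI by (auto simp: is_ideal_def)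
    then have "r \<in> J" unfolding J_def by blast
    have "1 \<in> J"
    proof (rule ccontr)
      assume "1 \<notin> J"
      then have "J \<in> A" using \<open>is_ideal J\<close> PJ P by (auto simp: A_def)
      then have "J = P" using Pmax PJ by blast
      then show False using \<open>r \<in> J\<close> r by simp
    qed
    then obtain p s where "1 = p + r*s" "p \<in> P" unfolding J_def by auto
    then have "1 - r*s = p" by (simp add: algebra_simps)
    then show "\<exists>s. 1 - r * s \<in> P" using \<open>p \<in> P\<close> by metis
  qed
  then show ?thesis using P by (auto simp: A_def)
qed


context module
begin
lemma annM_subspace: "subspace (ann_M scale P)"
  unfolding subspace_def ann_M_def
  apply (auto simp: scale_right_distrib)
  by (metis mult.commute scale_scale scale_zero_right)
lemma ideal_mult_sub: "subspace N \<Longrightarrow> ideal_mult scale I N \<subseteq> N"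
  unfolding ideal_mult_def by (rule span_minimal) (auto intro: subspace_scale)

lemma ideal_mult_mono: "I \<subseteq> J \<Longrightarrow> N \<subseteq> K \<Longrightarrow> ideal_mult scale I N \<subseteq> ideal_mult scale J K"
  unfolding ideal_mult_def by (rule span_mono) blast

lemma ideal_mult_base: "a \<in> I \<Longrightarrow> n \<in> N \<Longrightarrow> a *s n \<in> ideal_mult scale I N"
  unfolding ideal_mult_def by (rule span_base) blast
lemma maxl_div:
  assumes "maxl Q" "y \<in> ann_M scale Q" "r \<notin> Q"
  shows "\<exists>s. y = r *s (s *s y)"
proof -
  obtain t where t: "1 - r * t \<in> Q" using assms unfolding maxl_def by blast
  then have "(1 - r * t) *s y = 0" using assms(2) by (auto simp: ann_M_def)
  then have "y = r *s (t *s y)" by (simp add: scale_left_diff_distrib)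
  then show ?thesis by blast
qed

lemma maxl_kill:
  assumes "maxl Q" "y \<in> ann_M scale Q" "r \<notin> Q" "r *s y = 0"
  shows "y = 0"
proof -
  obtain s where "y = r *s (s *s y)" using maxl_div assms by blast
  also have "\<dots> = s *s (r *s y)" by (rule scale_left_commute)
  finally show ?thesis using assms by simp
qed

lemma maxl_unique:
  assumes "maxl P" "maxl Q" "y \<noteq> 0" "y \<in> ann_M scale P" "y \<in> ann_M scale Q"
  shows "P = Q"
proof -
  have "Q \<subseteq> P"
  proof
    fix q assume "q \<in> Q"
    then have "q *s y = 0" using assms by (auto simp: ann_M_def)
    then show "q \<in> P" using maxl_kill[OF assms(1,4)] assms(3) by blast
  qed
  moreover have "P \<subseteq> Q"
  proof
    fix q assume "q \<in> P"
    then have "q *s y = 0" using assms by (auto simp: ann_M_def)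
    then show "q \<in> Q" using maxl_kill[OF assms(2,5)] assms(3) by blast
  qed
  ultimately show ?thesis by blast
qed

lemma maxl_in_I:
  assumes "maxl P" "a \<in> I" "a \<notin> P" "N \<subseteq> ann_M scale P" "subspace N"
  shows "N \<subseteq> ideal_mult scale I N"
proof
  fix n assume n: "n \<in> N"
  then obtain s where "n = a *s (s *s n)" using maxl_div assms by blast
  moreover have "s *s n \<in> N" using n assms subspace_scale by blast
  ultimately show "n \<in> ideal_mult scale I N" using ideal_mult_base assms(2) by metis
qed

lemma compl:
  assumes "semisimple_module scale" "subspace N"
  shows "\<exists>L. subspace L \<and> N \<inter> L = {0} \<and> (\<forall>z. \<exists>x\<in>N. \<exists>y\<in>L. z = x + y)"
proof -
  have "\<exists>L. subspace L \<and> N \<inter> L = {0} \<and> {x + y | x y. x \<in> N \<and> y \<in> L} = UNIV"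
    using assms(1)[unfolded semisimple_module_def, rule_format, OF assms(2)] .
  then obtain L where L: "subspace L" "N \<inter> L = {0}" and U: "{x + y | x y. x \<in> N \<and> y \<in> L} = UNIV"
    by (elim exE conjE)
  have "\<exists>x\<in>N. \<exists>y\<in>L. z = x + y" for z
  proof -
    have "z \<in> {x + y | x y. x \<in> N \<and> y \<in> L}" by (subst U) (rule UNIV_I)
    then show ?thesis by blast
  qed
  then show ?thesis using L by blast
qed

lemma fact_a:
  assumes ss: "semisimple_module scale" and x: "x \<noteq> 0"
  shows "\<exists>P r. maxl P \<and> r *s x \<noteq> 0 \<and> r *s x \<in> ann_M scale P"
proof -
  define J0 where "J0 = {r. r *s x = 0}"
  have "is_ideal J0" unfolding is_ideal_def J0_def
  proof (intro conjI ballI allI)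
    fix t a assume "a \<in> {r. r *s x = 0}"
    then have "t *s (a *s x) = 0" by simp
    then show "t * a \<in> {r. r *s x = 0}" by (simp only: scale_scale mem_Collect_eq)
  qed (auto simp: scale_left_distrib)
  moreover have "1 \<notin> J0" using x by (simp add: J0_def)
  ultimately obtain P where P: "maxl P" "J0 \<subseteq> P" using exists_maxl by blast
  have PI: "is_ideal P" using P by (simp add: maxl_def)
  define Px where "Px = {p *s x | p. p \<in> P}"
  have sPx: "subspace Px" 
  proof (rule subspaceI)
    have "0 = (0::'a) *s x" "(0::'a) \<in> P" using PI by (auto simp: is_ideal_def)
    then show "0 \<in> Px" unfolding Px_def by blast
  next
    fix u v assume "u \<in> Px" "v \<in> Px"
    then obtain p q where pq: "u = p *s x" "v = q *s x" "p \<in> P" "q \<in> P" unfolding Px_def by blast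
    have "p + q \<in> P" using pq PI by (simp add: is_ideal_def)
    moreover have "u + v = (p+q) *s x" using pq by (simp add: scale_left_distrib)
    ultimately show "u + v \<in> Px" unfolding Px_def by blast
  next
    fix c u assume "u \<in> Px"
    then obtain p where p: "u = p *s x" "p \<in> P" unfolding Px_def by blast
    have "c * p \<in> P" using p PI by (simp add: is_ideal_def)
    moreover have "c *s u = (c*p) *s x" using p by simp
    ultimately show "c *s u \<in> Px" unfolding Px_def by blast
  qed
  obtain C where C: "subspace C" "Px \<inter> C = {0}" "\<forall>z. \<exists>a\<in>Px. \<exists>b\<in>C. z = a + b"
    using compl[OF ss sPx] by blast
  obtain a c where ac: "a \<in> Px" "c \<in> C" "x = a + c" using C(3) by blast
  obtain p0 where p0: "a = p0 *s x" "p0 \<in> P" using ac(1) unfolding Px_def by blast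
  have "(1 - p0) *s x = x - p0 *s x" by (simp add: scale_left_diff_distrib)
  also have "\<dots> = c" using ac(3) p0(1) by (metis add_diff_cancel_left')
  finally have c: "c = (1 - p0) *s x" by simp
  have "(1 - p0) *s x \<noteq> 0"
  proof
    assume "(1 - p0) *s x = 0"
    then have "1 - p0 \<in> J0" by (simp add: J0_def)
    then have "1 - p0 \<in> P" using P(2) by blast
    then have "(1 - p0) + p0 \<in> P" using p0 PI unfolding is_ideal_def by blast
    then show False using P(1) by (simp add: maxl_def)
  qed
  moreover have "(1 - p0) *s x \<in> ann_M scale P"
    unfolding ann_M_def
  proof (safe)
    fix q assume q: "q \<in> P"
    have "(1 - p0) * q \<in> P" using q PI unfolding is_ideal_def by blast
    then have "q * (1 - p0) \<in> P" by (simp only: mult.commute)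
    then have "(q * (1 - p0)) *s x \<in> Px" unfolding Px_def by blast
    then have "q *s ((1 - p0) *s x) \<in> Px" by (simp only: scale_scale)
    moreover have "q *s c \<in> C" by (rule subspace_scale[OF C(1) ac(2)])
    ultimately show "q *s ((1 - p0) *s x) = 0" using C(2) c by blast
  qed
  ultimately show ?thesis using P(1) by blast
qed

lemma socle:
  assumes ss: "semisimple_module scale" and K: "subspace K"
  shows "K \<subseteq> span (\<Union>{K \<inter> ann_M scale P | P. maxl P})"
proof
  let ?T = "span (\<Union>{K \<inter> ann_M scale P | P. maxl P})"
  have TK: "?T \<subseteq> K" using K by (intro span_minimal) auto
  obtain C where C: "subspace C" "?T \<inter> C = {0}" "\<forall>z. \<exists>a\<in>?T. \<exists>b\<in>C. z = a + b"
    using compl[OF ss, of ?T] by blast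
  fix x assume x: "x \<in> K"
  obtain t c where tc: "t \<in> ?T" "c \<in> C" "x = t + c" using C(3) by blast
  have tK: "t \<in> K" using TK tc(1) by blast
  have "c = x - t" using tc(3) by simp
  then have cK: "c \<in> K" using subspace_diff[OF K x tK] by simp
  have "c = 0"
  proof (rule ccontr)
    assume "c \<noteq> 0"
    then obtain P r where Pr: "maxl P" "r *s c \<noteq> 0" "r *s c \<in> ann_M scale P" using fact_a ss by blast
    have "r *s c \<in> K" using cK K subspace_scale by blast
    then have "r *s c \<in> ?T" using Pr by (intro span_base) blast
    moreover have "r *s c \<in> C" using tc C(1) subspace_scale by blast
    ultimately show False using C(2) Pr(2) by blast
  qed
  then show "x \<in> ?T" using tc by simp
qed

lemma H:
  assumes ss: "semisimple_module scale" and y: "y \<in> ann_M scale P" "y \<in> ideal_mult scale P UNIV"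
  shows "y = 0"
proof -
  obtain E where E: "subspace E" "span {y} \<inter> E = {0}" "\<forall>z. \<exists>a\<in>span {y}. \<exists>b\<in>E. z = a + b"
    using compl[OF ss, of "span {y}"] by blast
  have "ideal_mult scale P UNIV \<subseteq> E"
    unfolding ideal_mult_def
  proof (rule span_minimal[OF _ E(1)], safe)
    fix a n assume a: "a \<in> P"
    obtain w e where we: "w \<in> span {y}" "e \<in> E" "n = w + e" using E(3) by blast
    have "w \<in> range (\<lambda>k. k *s y)" using we(1) span_singleton by blast
    then obtain k where "w = k *s y" by blast
    then have "a *s w = k *s (a *s y)" by (simp only: scale_left_commute)
    also have "\<dots> = 0" using a y by (simp add: ann_M_def)
    finally have "a *s n = a *s e" using we by (simp add: scale_right_distrib)
    moreover have "a *s e \<in> E" by (rule subspace_scale[OF E(1) we(2)])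
    ultimately show "a *s n \<in> E" by simp
  qed
  then have "y \<in> E" using y(2) by blast
  moreover have "y \<in> span {y}" by (rule span_base) simp
  ultimately have "y \<in> span {y} \<inter> E" by blast
  then show ?thesis using E(2) by simp
qed

lemma G:
  assumes ss: "semisimple_module scale" and L: "subspace L" "l \<in> L"
  shows "\<exists>a d. a \<in> ideal_mult scale P L \<and> d \<in> L \<and> d \<in> ann_M scale P \<and> l = a + d"
proof -
  have sI: "subspace (ideal_mult scale P L)" by (simp add: ideal_mult_def)
  obtain D where D: "subspace D" "ideal_mult scale P L \<inter> D = {0}"
     "\<forall>z. \<exists>a\<in>ideal_mult scale P L. \<exists>b\<in>D. z = a + b"
    using compl[OF ss sI] by blast
  obtain a d where ad: "a \<in> ideal_mult scale P L" "d \<in> D" "l = a + d" using D(3) by blast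
  have "a \<in> L" using ad ideal_mult_sub[OF L(1)] by blast
  moreover have "d = l - a" using ad(3) by simp
  ultimately have dL: "d \<in> L" using subspace_diff[OF L(1) L(2)] by simp
  have "d \<in> ann_M scale P" unfolding ann_M_def
  proof safe
    fix p assume "p \<in> P"
    then have "p *s d \<in> ideal_mult scale P L" using dL ideal_mult_base by blast
    moreover have "p *s d \<in> D" using ad D(1) subspace_scale by blast
    ultimately show "p *s d = 0" using D(2) by blast
  qed
  then show ?thesis using ad dL by blast
qed

end

context module
begin

lemma second_comp:
  assumes ss: "semisimple_module scale" and N: "second_sub scale N"
  shows "\<exists>P. maxl P \<and> N \<subseteq> ann_M scale P"
proof -
  have sN: "subspace N" and N0: "N \<noteq> {0}"
    and Nid: "\<And>I. is_ideal I \<Longrightarrow> ideal_mult scale I N = N \<or> ideal_mult scale I N = {0}"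
    using N unfolding second_sub_def by auto
  obtain x where x: "x \<in> N" "x \<noteq> 0" using N0 subspace_0[OF sN] by blast
  obtain P r where Pr: "maxl P" "r *s x \<noteq> 0" "r *s x \<in> ann_M scale P"
    using fact_a[OF ss x(2)] by blast
  have yN: "r *s x \<in> N" by (rule subspace_scale[OF sN x(1)])
  have "is_ideal P" using Pr(1) by (simp add: maxl_def)
  then have "ideal_mult scale P N = N \<or> ideal_mult scale P N = {0}" by (rule Nid)
  moreover have "ideal_mult scale P N \<noteq> N"
  proof
    assume "ideal_mult scale P N = N"
    then have "r *s x \<in> ideal_mult scale P UNIV" using yN ideal_mult_mono[of P P N UNIV] by blast
    then show False using H[OF ss Pr(3)] Pr(2) by blast
  qed
  ultimately have Z: "ideal_mult scale P N = {0}" by blast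
  have "N \<subseteq> ann_M scale P"
    unfolding ann_M_def
  proof safe
    fix n p assume "n \<in> N" "p \<in> P"
    then have "p *s n \<in> ideal_mult scale P N" by (rule ideal_mult_base[rotated])
    then show "p *s n = 0" using Z by blast
  qed
  then show ?thesis using Pr(1) by blast
qed

lemma comp_second:
  assumes sN: "subspace N" and N0: "N \<noteq> {0}" and P: "maxl P" and NP: "N \<subseteq> ann_M scale P"
  shows "second_sub scale N"
  unfolding second_sub_def
proof (intro conjI allI impI sN N0)
  fix I :: "'a set" assume I: "is_ideal I"
  show "ideal_mult scale I N = N \<or> ideal_mult scale I N = {0}"
  proof (cases "I \<subseteq> P")
    case True
    have "ideal_mult scale I N \<subseteq> {0}"
      unfolding ideal_mult_def
    proof (rule span_minimal)
      show "{a *s n |a n. a \<in> I \<and> n \<in> N} \<subseteq> {0}"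
      proof safe
        fix a n assume "a \<in> I" "n \<in> N"
        then show "a *s n = 0" using True NP by (auto simp: ann_M_def)
      qed
    qed simp
    moreover have "0 \<in> ideal_mult scale I N" unfolding ideal_mult_def by (rule span_zero)
    ultimately show ?thesis by blast
  next
    case False
    then obtain a where a: "a \<in> I" "a \<notin> P" by blast
    have "N \<subseteq> ideal_mult scale I N" by (rule maxl_in_I[OF P a NP sN])
    then show ?thesis using ideal_mult_sub[OF sN] by blast
  qed
qed

lemma second_ps:
  assumes ss: "semisimple_module scale" and N: "second_sub scale N"
  shows "ps_hollow scale N"
proof -
  obtain P where P: "maxl P" "N \<subseteq> ann_M scale P" using second_comp[OF ss N] by blast
  have sN: "subspace N" and N0: "N \<noteq> {0}" using N unfolding second_sub_def by auto
  show ?thesis unfolding ps_hollow_def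
  proof (intro conjI allI impI sN N0)
    fix I L assume I: "is_ideal I" and L: "subspace L"
      and NIL: "N \<subseteq> {x + y |x y. x \<in> ideal_mult scale I UNIV \<and> y \<in> L}"
    show "N \<subseteq> ideal_mult scale I UNIV \<or> N \<subseteq> L"
    proof (cases "I \<subseteq> P")
      case False
      then obtain a where a: "a \<in> I" "a \<notin> P" by blast
      have "N \<subseteq> ideal_mult scale I N" by (rule maxl_in_I[OF P(1) a P(2) sN])
      also have "\<dots> \<subseteq> ideal_mult scale I UNIV" by (rule ideal_mult_mono) auto
      finally show ?thesis by blast
    next
      case True
      have "N \<subseteq> L"
      proof
        fix n assume n: "n \<in> N"
        then obtain u l where ul: "u \<in> ideal_mult scale I UNIV" "l \<in> L" "n = u + l" using NIL by blast
        obtain a d where ad: "a \<in> ideal_mult scale P L" "d \<in> L" "d \<in> ann_M scale P" "l = a + d"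
          using G[OF ss L ul(2)] by blast
        have uP: "u \<in> ideal_mult scale P UNIV" using ul(1) ideal_mult_mono[OF True, of UNIV UNIV] by blast
        have aP: "a \<in> ideal_mult scale P UNIV" using ad(1) ideal_mult_mono[of P P L UNIV] by blast
        have z1: "u + a \<in> ideal_mult scale P UNIV" unfolding ideal_mult_def
          using uP aP unfolding ideal_mult_def by (rule span_add)
        have "u + a = n - d" using ul(3) ad(4) by (simp add: algebra_simps)
        moreover have "n - d \<in> ann_M scale P"
          using subspace_diff[OF annM_subspace, of n P d] n P(2) ad(3) by blast
        ultimately have "u + a = 0" using H[OF ss _ z1] by simp
        then have "n = d" using \<open>u + a = n - d\<close> by simp
        then show "n \<in> L" using ad(2) by simp
      qed
      then show ?thesis by blast
    qed
  qed
qed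

lemma ps_second:
  assumes ss: "semisimple_module scale" and N: "ps_hollow scale N"
  shows "second_sub scale N"
proof -
  have sN: "subspace N" and N0: "N \<noteq> {0}"
    and ps: "\<And>I L. is_ideal I \<Longrightarrow> subspace L \<Longrightarrow>
        N \<subseteq> {x + y | x y. x \<in> ideal_mult scale I UNIV \<and> y \<in> L} \<Longrightarrow>
        N \<subseteq> ideal_mult scale I UNIV \<or> N \<subseteq> L"
    using N unfolding ps_hollow_def by auto
  obtain x where x: "x \<in> N" "x \<noteq> 0" using N0 subspace_0[OF sN] by blast
  obtain P r where Pr: "maxl P" "r *s x \<noteq> 0" "r *s x \<in> ann_M scale P"
    using fact_a[OF ss x(2)] by blast
  have yN: "r *s x \<in> N" by (rule subspace_scale[OF sN x(1)])
  have PI: "is_ideal P" using Pr(1) by (simp add: maxl_def)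
  have "N \<subseteq> {x + y | x y. x \<in> ideal_mult scale P UNIV \<and> y \<in> ann_M scale P}"
  proof
    fix n assume "n \<in> N"
    obtain a d where "a \<in> ideal_mult scale P UNIV" "d \<in> UNIV" "d \<in> ann_M scale P" "n = a + d"
      using G[OF ss subspace_UNIV, of n P] by blast
    then show "n \<in> {x + y | x y. x \<in> ideal_mult scale P UNIV \<and> y \<in> ann_M scale P}" by blast
  qed
  then have "N \<subseteq> ideal_mult scale P UNIV \<or> N \<subseteq> ann_M scale P"
    using ps[OF PI annM_subspace] by blast
  moreover have "\<not> N \<subseteq> ideal_mult scale P UNIV"
    using H[OF ss Pr(3)] Pr(2) yN by blast
  ultimately have "N \<subseteq> ann_M scale P" by blast
  then show ?thesis by (rule comp_second[OF sN N0 Pr(1)])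
qed

lemma mult_simple:
  assumes ss: "semisimple_module scale" and M: "multiplication_module scale"
    and N: "second_sub scale N"
  shows "simple_sub scale N"
proof -
  obtain P where P: "maxl P" "N \<subseteq> ann_M scale P" using second_comp[OF ss N] by blast
  have sN: "subspace N" and N0: "N \<noteq> {0}" using N unfolding second_sub_def by auto
  show ?thesis unfolding simple_sub_def
  proof (intro conjI allI impI sN N0)
    fix L assume L: "subspace L \<and> L \<subseteq> N"
    then obtain I where I: "is_ideal I" "L = ideal_mult scale I UNIV"
      using M unfolding multiplication_module_def by blast
    show "L = {0} \<or> L = N"
    proof (cases "I \<subseteq> P")
      case True
      have "L \<subseteq> {0}"
      proof
        fix z assume z: "z \<in> L"
        then have "z \<in> ideal_mult scale P UNIV" using I(2) ideal_mult_mono[OF True, of UNIV UNIV] by blast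
        moreover have "z \<in> ann_M scale P" using z L P(2) by blast
        ultimately show "z \<in> {0}" using H[OF ss] by blast
      qed
      then show ?thesis using subspace_0[of L] L by blast
    next
      case False
      then obtain a where a: "a \<in> I" "a \<notin> P" by blast
      have "N \<subseteq> ideal_mult scale I N" by (rule maxl_in_I[OF P(1) a P(2) sN])
      also have "\<dots> \<subseteq> ideal_mult scale I UNIV" by (rule ideal_mult_mono) auto
      finally show ?thesis using I(2) L by blast
    qed
  qed
qed

lemma comult_simple:
  assumes ss: "semisimple_module scale" and M: "comultiplication_module scale"
    and N: "second_sub scale N"
  shows "simple_sub scale N"
proof -
  obtain P where P: "maxl P" "N \<subseteq> ann_M scale P" using second_comp[OF ss N] by blast
  have sN: "subspace N" and N0: "N \<noteq> {0}" using N unfolding second_sub_def by auto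
  show ?thesis unfolding simple_sub_def
  proof (intro conjI allI impI sN N0)
    fix L assume L: "subspace L \<and> L \<subseteq> N"
    then have LL: "L = ann_M scale (ann scale L)"
      using M unfolding comultiplication_module_def by blast
    show "L = {0} \<or> L = N"
    proof (cases "L = {0}")
      case False
      then obtain l where l: "l \<in> L" "l \<noteq> 0" using subspace_0[of L] L by blast
      have "ann scale L \<subseteq> P"
      proof
        fix r assume "r \<in> ann scale L"
        then have "r *s l = 0" using l by (simp add: ann_def)
        then show "r \<in> P" using maxl_kill[OF P(1), of l r] l L P(2) by blast
      qed
      then have "ann_M scale P \<subseteq> ann_M scale (ann scale L)" by (auto simp: ann_M_def)
      then have "N \<subseteq> L" using P(2) LL by blast
      then show ?thesis using L by blast
    qed simp
  qed
qed

lemma max_comp: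
  assumes ss: "semisimple_module scale" and P: "maxl P" and P0: "ann_M scale P \<noteq> {0}"
  shows "max_second_sub scale (ann_M scale P)"
  unfolding max_second_sub_def
proof (intro conjI allI impI)
  show sec: "second_sub scale (ann_M scale P)"
    by (rule comp_second[OF annM_subspace P0 P]) simp
  fix K assume K: "second_sub scale K \<and> ann_M scale P \<subseteq> K"
  then obtain Q where Q: "maxl Q" "K \<subseteq> ann_M scale Q" using second_comp[OF ss] by blast
  obtain y where y: "y \<in> ann_M scale P" "y \<noteq> 0" using P0 subspace_0[OF annM_subspace] by blast
  have "P = Q" using maxl_unique[OF P Q(1) y(2) y(1)] y(1) K Q(2) by blast
  then show "K = ann_M scale P" using K Q(2) by blast
qed

lemma spanall:
  assumes ss: "semisimple_module scale"
  shows "UNIV \<subseteq> span (\<Union>{ann_M scale P | P. maxl P})"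
proof -
  have "UNIV \<subseteq> span (\<Union>{UNIV \<inter> ann_M scale P | P. maxl P})" by (rule socle[OF ss subspace_UNIV])
  then show ?thesis by simp
qed

lemma kill_all:
  assumes ss: "semisimple_module scale"
    and k: "\<And>Q z. maxl Q \<Longrightarrow> z \<in> ann_M scale Q \<Longrightarrow> r *s z = 0"
  shows "r *s x = 0"
proof -
  have "x \<in> span (\<Union>{ann_M scale P | P. maxl P})" using spanall[OF ss] by blast
  moreover have "subspace {x. r *s x = 0}" unfolding subspace_def
    by (auto simp: scale_right_distrib) (metis mult.commute scale_scale scale_zero_right)
  ultimately have "x \<in> {x. r *s x = 0}"
    by (rule span_subspace_induct) (use k in blast)
  then show ?thesis by simp
qed

end

context module
begin

lemma kerr_subspace: "subspace {x. r *s x = 0}"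
  unfolding subspace_def
  by (auto simp: scale_right_distrib) (metis mult.commute scale_scale scale_zero_right)

lemma sep:
  assumes ss: "semisimple_module scale"
    and hyp: "\<forall>N. max_second_sub scale N \<longrightarrow>
           ann scale UNIV \<noteq> \<Inter> {ann scale K | K. max_second_sub scale K \<and> K \<noteq> N}"
    and P: "maxl P" and P0: "ann_M scale P \<noteq> {0}"
  shows "\<exists>r. r \<notin> P \<and> (\<forall>Q z. maxl Q \<and> Q \<noteq> P \<and> z \<in> ann_M scale Q \<longrightarrow> r *s z = 0)"
proof -
  let ?S = "{ann scale K | K. max_second_sub scale K \<and> K \<noteq> ann_M scale P}"
  have ne: "ann scale UNIV \<noteq> \<Inter>?S" using hyp max_comp[OF ss P P0] by blast
  have "ann scale UNIV \<subseteq> \<Inter>?S" by (auto simp: ann_def)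
  then obtain r where r: "r \<in> \<Inter>?S" "r \<notin> ann scale UNIV" using ne by blast
  have other: "r *s z = 0" if Q: "maxl Q" "Q \<noteq> P" "z \<in> ann_M scale Q" for Q z
  proof (cases "ann_M scale Q = {0}")
    case True then show ?thesis using Q by simp
  next
    case False
    have mQ: "max_second_sub scale (ann_M scale Q)" by (rule max_comp[OF ss Q(1) False])
    have "ann_M scale Q \<noteq> ann_M scale P"
    proof
      assume eq: "ann_M scale Q = ann_M scale P"
      obtain y where y: "y \<in> ann_M scale Q" "y \<noteq> 0" using False subspace_0[OF annM_subspace] by blast
      have "Q = P" using maxl_unique[OF Q(1) P y(2) y(1)] y(1) eq by blast
      then show False using Q(2) by simp
    qed
    then have "ann scale (ann_M scale Q) \<in> ?S" using mQ by blast
    then have "r \<in> ann scale (ann_M scale Q)" using r(1) by blast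
    then show ?thesis using Q(3) by (simp add: ann_def)
  qed
  have "r \<notin> P"
  proof
    assume rP: "r \<in> P"
    have "r *s x = 0" for x
    proof (rule kill_all[OF ss])
      fix Q z assume "maxl Q" "z \<in> ann_M scale Q"
      then show "r *s z = 0" using other rP by (cases "Q = P") (auto simp: ann_M_def)
    qed
    then have "r \<in> ann scale UNIV" by (simp add: ann_def)
    then show False using r(2) by simp
  qed
  then show ?thesis using other by blast
qed

lemma three_comult:
  assumes ss: "semisimple_module scale"
    and hyp: "\<forall>N. max_second_sub scale N \<longrightarrow>
           ann scale UNIV \<noteq> \<Inter> {ann scale K | K. max_second_sub scale K \<and> K \<noteq> N}"
    and T: "\<forall>N. second_sub scale N \<longrightarrow> simple_sub scale N"
  shows "comultiplication_module scale"
  unfolding comultiplication_module_def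
proof (intro allI impI)
  fix K assume K: "subspace K"
  let ?A = "ann_M scale (ann scale K)"
  have "K \<subseteq> ?A" by (auto simp: ann_M_def ann_def)
  moreover have "?A \<subseteq> K"
  proof -
    have "?A \<subseteq> span (\<Union>{?A \<inter> ann_M scale Q | Q. maxl Q})" by (rule socle[OF ss annM_subspace])
    also have "\<dots> \<subseteq> K"
    proof (rule span_minimal[OF _ K], safe)
      fix y Q assume Q: "maxl Q" and yA: "y \<in> ?A" and yQ: "y \<in> ann_M scale Q"
      show "y \<in> K"
      proof (rule ccontr)
        assume yK: "y \<notin> K"
        then have y0: "y \<noteq> 0" using subspace_0[OF K] by blast
        then have Q0: "ann_M scale Q \<noteq> {0}" using yQ by blast
        have "simple_sub scale (ann_M scale Q)"
          using T comp_second[OF annM_subspace Q0 Q] by blast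
        then have "K \<inter> ann_M scale Q = {0} \<or> K \<inter> ann_M scale Q = ann_M scale Q"
          unfolding simple_sub_def using subspace_inter[OF K annM_subspace] by blast
        then have KQ: "K \<inter> ann_M scale Q = {0}" using yK yQ by blast
        obtain r where r: "r \<notin> Q" "\<forall>Q' z. maxl Q' \<and> Q' \<noteq> Q \<and> z \<in> ann_M scale Q' \<longrightarrow> r *s z = 0"
          using sep[OF ss hyp Q Q0] by blast
        have "r \<in> ann scale K"
          unfolding ann_def
        proof safe
          fix k assume k: "k \<in> K"
          then have "k \<in> span (\<Union>{K \<inter> ann_M scale Q' | Q'. maxl Q'})" using socle[OF ss K] by blast
          then have "k \<in> {x. r *s x = 0}"
          proof (rule span_subspace_induct[OF _ kerr_subspace])
            fix z assume "z \<in> \<Union>{K \<inter> ann_M scale Q' | Q'. maxl Q'}"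
            then obtain Q' where "maxl Q'" "z \<in> K" "z \<in> ann_M scale Q'" by blast
            show "z \<in> {x. r *s x = 0}"
            proof (cases "Q' = Q")
              case True
              then have "z \<in> K \<inter> ann_M scale Q" using \<open>z \<in> K\<close> \<open>z \<in> ann_M scale Q'\<close> by blast
              then have "z = 0" using KQ by blast
              then show ?thesis by simp
            next
              case False
              then show ?thesis using r(2) \<open>maxl Q'\<close> \<open>z \<in> ann_M scale Q'\<close> by blast
            qed
          qed
          then show "r *s k = 0" by simp
        qed
        then have "r *s y = 0" using yA by (simp add: ann_M_def)
        then show False using maxl_kill[OF Q yQ r(1)] y0 by blast
      qed
    qed
    finally show ?thesis .
  qed
  ultimately show "K = ?A" by blast
qed

lemma three_mult:
  assumes ss: "semisimple_module scale"
    and hyp: "\<forall>N. max_second_sub scale N \<longrightarrow>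
           ann scale UNIV \<noteq> \<Inter> {ann scale K | K. max_second_sub scale K \<and> K \<noteq> N}"
    and T: "\<forall>N. second_sub scale N \<longrightarrow> simple_sub scale N"
  shows "multiplication_module scale"
  unfolding multiplication_module_def
proof (intro allI impI)
  fix N assume N: "subspace N"
  define I where "I = {r. \<forall>Q x. maxl Q \<and> \<not> ann_M scale Q \<subseteq> N \<and> x \<in> ann_M scale Q \<longrightarrow> r *s x = 0}"
  have II: "is_ideal I" unfolding is_ideal_def
  proof (intro conjI ballI allI)
    show "0 \<in> I" by (simp add: I_def)
  next
    fix a b assume "a \<in> I" "b \<in> I"
    then show "a + b \<in> I" by (auto simp: I_def scale_left_distrib)
  next
    fix t a assume a: "a \<in> I"
    show "t * a \<in> I" unfolding I_def mem_Collect_eq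
    proof (intro allI impI)
      fix Q x assume "maxl Q \<and> \<not> ann_M scale Q \<subseteq> N \<and> x \<in> ann_M scale Q"
      then have "a *s x = 0" using a by (simp add: I_def)
      then have "t *s (a *s x) = 0" by simp
      then show "(t * a) *s x = 0" by (simp only: scale_scale)
    qed
  qed
  have "ideal_mult scale I UNIV \<subseteq> N"
    unfolding ideal_mult_def
  proof (rule span_minimal[OF _ N], safe)
    fix r m assume r: "r \<in> I"
    have "m \<in> span (\<Union>{ann_M scale P | P. maxl P})" using spanall[OF ss] by blast
    moreover have "subspace {m. r *s m \<in> N}"
    proof (rule subspaceI)
      show "0 \<in> {m. r *s m \<in> N}" using subspace_0[OF N] by simp
    next
      fix x y assume "x \<in> {m. r *s m \<in> N}" "y \<in> {m. r *s m \<in> N}"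
      then show "x + y \<in> {m. r *s m \<in> N}" using subspace_add[OF N] by (simp add: scale_right_distrib)
    next
      fix c x assume "x \<in> {m. r *s m \<in> N}"
      then have "r *s x \<in> N" by simp
      then have "c *s (r *s x) \<in> N" by (rule subspace_scale[OF N])
      then show "c *s x \<in> {m. r *s m \<in> N}" by (simp only: mem_Collect_eq scale_left_commute[of r c])
    qed
    ultimately have "m \<in> {m. r *s m \<in> N}"
    proof (rule span_subspace_induct)
      fix z assume "z \<in> \<Union>{ann_M scale P | P. maxl P}"
      then obtain Q where Q: "maxl Q" "z \<in> ann_M scale Q" by blast
      show "z \<in> {m. r *s m \<in> N}"
      proof (cases "ann_M scale Q \<subseteq> N")
        case True
        have "r *s z \<in> ann_M scale Q" by (rule subspace_scale[OF annM_subspace Q(2)])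
        then show ?thesis using True by blast
      next
        case False
        then have "r *s z = 0" using r Q unfolding I_def by blast
        then show ?thesis using subspace_0[OF N] by simp
      qed
    qed
    then show "r *s m \<in> N" by simp
  qed
  moreover have "N \<subseteq> ideal_mult scale I UNIV"
  proof -
    have "N \<subseteq> span (\<Union>{N \<inter> ann_M scale Q | Q. maxl Q})" by (rule socle[OF ss N])
    also have "\<dots> \<subseteq> ideal_mult scale I UNIV"
    proof (rule span_minimal)
      show "subspace (ideal_mult scale I UNIV)" by (simp add: ideal_mult_def)
      show "\<Union>{N \<inter> ann_M scale Q | Q. maxl Q} \<subseteq> ideal_mult scale I UNIV"
      proof safe
        fix y Q assume Q: "maxl Q" "y \<in> N" "y \<in> ann_M scale Q"
        show "y \<in> ideal_mult scale I UNIV"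
        proof (cases "y = 0")
          case True then show ?thesis unfolding ideal_mult_def using span_zero by simp
        next
          case False
          then have Q0: "ann_M scale Q \<noteq> {0}" using Q by blast
          have "simple_sub scale (ann_M scale Q)"
            using T comp_second[OF annM_subspace Q0 Q(1)] by blast
          then have "N \<inter> ann_M scale Q = {0} \<or> N \<inter> ann_M scale Q = ann_M scale Q"
            unfolding simple_sub_def using subspace_inter[OF N annM_subspace] by blast
          then have QN: "ann_M scale Q \<subseteq> N" using Q False by blast
          obtain r where r: "r \<notin> Q" "\<forall>Q' z. maxl Q' \<and> Q' \<noteq> Q \<and> z \<in> ann_M scale Q' \<longrightarrow> r *s z = 0"
            using sep[OF ss hyp Q(1) Q0] by blast
          have rI: "r \<in> I" unfolding I_def using r(2) QN by blast
          obtain t where "y = r *s (t *s y)" using maxl_div[OF Q(1) Q(3) r(1)] by blast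
          then show ?thesis using ideal_mult_base[OF rI, of "t *s y" UNIV] by simp
        qed
      qed
    qed
    finally show ?thesis .
  qed
  ultimately show "\<exists>I. is_ideal I \<and> N = ideal_mult scale I UNIV" using II by blast
qed

end

theorem theorem5p17:
  fixes scale :: "'r::comm_ring_1 \<Rightarrow> 'm::ab_group_add \<Rightarrow> 'm"
  assumes "module scale"
    and "semisimple_module scale"
    and "\<forall>N. max_second_sub scale N \<longrightarrow>
           ann scale UNIV \<noteq> \<Inter> {ann scale K | K. max_second_sub scale K \<and> K \<noteq> N}"
  shows "(multiplication_module scale \<longleftrightarrow> (\<forall>N. ps_hollow scale N \<longrightarrow> simple_sub scale N))
       \<and> ((\<forall>N. ps_hollow scale N \<longrightarrow> simple_sub scale N) \<longleftrightarrow> (\<forall>N. second_sub scale N \<longrightarrow> simple_sub scale N))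
       \<and> ((\<forall>N. second_sub scale N \<longrightarrow> simple_sub scale N) \<longleftrightarrow> comultiplication_module scale)"
proof -
  interpret module scale by (rule assms(1))
  have e23: "(\<forall>N. ps_hollow scale N \<longrightarrow> simple_sub scale N) \<longleftrightarrow> (\<forall>N. second_sub scale N \<longrightarrow> simple_sub scale N)"
    using second_ps[OF assms(2)] ps_second[OF assms(2)] by blast
  have e13: "multiplication_module scale \<longleftrightarrow> (\<forall>N. second_sub scale N \<longrightarrow> simple_sub scale N)"
    using mult_simple[OF assms(2)] three_mult[OF assms(2,3)] by blast
  have e34: "(\<forall>N. second_sub scale N \<longrightarrow> simple_sub scale N) \<longleftrightarrow> comultiplication_module scale"
    using comult_simple[OF assms(2)] three_comult[OF assms(2,3)] by blast
  show ?thesis using e13 e23 e34 by blast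
qed

end
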